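(* Let $X$ be a nonzero real Banach space, $m\ge1$, $f_0\colon X\to\,]{-}\infty,\infty]$ proper, convex and lower semicontinuous, and $f_1,\dots,f_m$ real-valued convex continuous functions on $X$. Suppose there exists $x^{**}\in X^{**}$ such that $f_i^{**}(x^{**})\le0$ for all $i=0,\dots,m$. Then for every $\varepsilon>0$ there exists $x\in X$ such that $f_i(x)\le\varepsilon$ for all $i=0,\dots,m$.
   Context: $f^*(x^* )=\sup_{x\in X}[\langle x,x^*\rangle-f(x)]$ on $X^*$ and $f^{**}(x^{**})=\sup_{x^*\in X^*}[\langle x^*,x^{**}\rangle-f^*(x^* )]$ on the bidual $X^{**}$. *)

theory Defs
  imports "HOL-Analysis.Analysis"
begin

text \<open>Dual space: X* = X \<Rightarrow>L real (bounded linear functionals); bidual X** = X* \<Rightarrow>L real.\<close>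

definition proper_fun :: "('a \<Rightarrow> ereal) \<Rightarrow> bool" where
  "proper_fun f \<longleftrightarrow> (\<forall>x. f x \<noteq> -\<infinity>) \<and> (\<exists>x. f x \<noteq> \<infinity>)"

definition convex_ext :: "('a::real_vector \<Rightarrow> ereal) \<Rightarrow> bool" where
  "convex_ext f \<longleftrightarrow> convex {(x, r::real). f x \<le> ereal r}"

definition lsc_ext :: "('a::topological_space \<Rightarrow> ereal) \<Rightarrow> bool" where
  "lsc_ext f \<longleftrightarrow> (\<forall>c. closed {x. f x \<le> c})"

definition conj :: "('a::real_normed_vector \<Rightarrow> ereal) \<Rightarrow> ('a \<Rightarrow>\<^sub>L real) \<Rightarrow> ereal" where
  "conj f xs = (SUP x. ereal (blinfun_apply xs x) - f x)"

definition biconj :: "('a::real_normed_vector \<Rightarrow> ereal) \<Rightarrow> (('a \<Rightarrow>\<^sub>L real) \<Rightarrow>\<^sub>L real) \<Rightarrow> ereal" where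
  "biconj f xss = (SUP xs. ereal (blinfun_apply xss xs) - conj f xs)"

end

theory Submission
  imports Defs "HOL-Library.Function_Algebras"
begin


definition sublin :: "('v::real_vector \<Rightarrow> real) \<Rightarrow> bool" where
  "sublin p \<longleftrightarrow> (\<forall>x y. p (x + y) \<le> p x + p y) \<and> (\<forall>c x. c > 0 \<longrightarrow> p (c *\<^sub>R x) = c * p x)"

definition hbgraph :: "('v::real_vector \<Rightarrow> real) \<Rightarrow> 'v \<Rightarrow> ('v \<times> real) set \<Rightarrow> bool" where
  "hbgraph p x0 G \<longleftrightarrow> (x0, p x0) \<in> G \<and> (\<forall>x a b. (x,a)\<in>G \<longrightarrow> (x,b)\<in>G \<longrightarrow> a = b)
     \<and> (\<forall>x a y b. (x,a)\<in>G \<longrightarrow> (y,b)\<in>G \<longrightarrow> (x+y, a+b)\<in>G)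
     \<and> (\<forall>x a c. (x,a)\<in>G \<longrightarrow> (c *\<^sub>R x, c*a) \<in> G) \<and> (\<forall>x a. (x,a)\<in>G \<longrightarrow> a \<le> p x)"

lemma sublin_0: assumes "sublin p" shows "p 0 = 0"
proof -
  have "p ((2::real) *\<^sub>R 0) = 2 * p 0" using assms unfolding sublin_def by (meson zero_less_numeral)
  thus ?thesis by simp
qed

lemma sublin_neg: assumes "sublin p" shows "- p (-x) \<le> p x"
proof -
  have "p (x + -x) \<le> p x + p (-x)" using assms unfolding sublin_def by blast
  thus ?thesis using sublin_0[OF assms] by simp
qed

lemma hb_init:
  assumes p: "sublin p"
  shows "hbgraph p x0 {(t *\<^sub>R x0, t * p x0) | t. True}"
proof -
  let ?G = "{(t *\<^sub>R x0, t * p x0) | t. True}"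
  have sv: "a = b" if H: "(x,a)\<in>?G" "(x,b)\<in>?G" for x a b
  proof -
    obtain t s where ts: "x = t *\<^sub>R x0" "a = t * p x0" "x = s *\<^sub>R x0" "b = s * p x0" using H by blast
    show ?thesis
    proof (cases "x0 = 0")
      case True thus ?thesis using ts sublin_0[OF p] by simp
    next
      case False
      hence "t = s" using ts by (metis scaleR_cancel_right)
      thus ?thesis using ts by simp
    qed
  qed
  have dom: "a \<le> p x" if H: "(x,a)\<in>?G" for x a
  proof -
    obtain t where t: "x = t *\<^sub>R x0" "a = t * p x0" using H by blast
    consider "t > 0" | "t = 0" | "t < 0" by linarith
    thus ?thesis
    proof cases
      case 1 thus ?thesis using t p unfolding sublin_def by simp
    next
      case 2 thus ?thesis using t sublin_0[OF p] by simp
    next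
      case 3
      have "p x = p ((-t) *\<^sub>R (-x0))" using t by simp
      also have "\<dots> = (-t) * p (-x0)" using p 3 unfolding sublin_def by (meson neg_0_less_iff_less)
      finally have "p x = (-t) * p (-x0)" .
      moreover have "- p (-x0) \<le> p x0" by (rule sublin_neg[OF p])
      ultimately show ?thesis using t 3
        by (metis minus_mult_commute mult_le_cancel_left_neg neg_le_iff_le)
    qed
  qed
  show ?thesis unfolding hbgraph_def
  proof (intro conjI allI impI)
    show "(x0, p x0) \<in> ?G" by (rule CollectI, rule exI[of _ 1]) simp
  next
    fix x a y b assume "(x,a)\<in>?G" "(y,b)\<in>?G"
    then obtain t s where "x = t *\<^sub>R x0" "a = t * p x0" "y = s *\<^sub>R x0" "b = s * p x0" by auto
    thus "(x+y, a+b)\<in>?G" by (auto intro!: exI[of _ "t+s"] simp: algebra_simps)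
  next
    fix x a c assume "(x,a)\<in>?G"
    then obtain t where "x = t *\<^sub>R x0" "a = t * p x0" by auto
    thus "(c *\<^sub>R x, c*a)\<in>?G" by (auto intro!: exI[of _ "c*t"] simp: algebra_simps)
  qed (use sv dom in auto)
qed

lemma hbgraph_union:
  assumes C: "C \<in> chains {G. hbgraph p x0 G}" and ne: "C \<noteq> {}"
  shows "hbgraph p x0 (\<Union>C)"
proof -
  have CA: "\<And>G. G \<in> C \<Longrightarrow> hbgraph p x0 G" using C chainsD2 by blast
  have two: "\<exists>G\<in>C. (x,a)\<in>G \<and> (y,b)\<in>G" if H: "(x,a)\<in>\<Union>C" "(y,b)\<in>\<Union>C" for x a y b
  proof -
    obtain G1 G2 where "G1\<in>C" "G2\<in>C" "(x,a)\<in>G1" "(y,b)\<in>G2" using H by blast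
    moreover have "G1 \<subseteq> G2 \<or> G2 \<subseteq> G1" using chainsD[OF C \<open>G1\<in>C\<close> \<open>G2\<in>C\<close>] .
    ultimately show ?thesis by blast
  qed
  obtain G0 where "G0 \<in> C" using ne by auto
  show ?thesis unfolding hbgraph_def
  proof (intro conjI allI impI)
    show "(x0, p x0) \<in> \<Union>C" using CA[OF \<open>G0\<in>C\<close>] \<open>G0\<in>C\<close> unfolding hbgraph_def by blast
  next
    fix x a b assume "(x,a)\<in>\<Union>C" "(x,b)\<in>\<Union>C"
    then obtain G where "G\<in>C" "(x,a)\<in>G" "(x,b)\<in>G" using two by blast
    thus "a = b" using CA unfolding hbgraph_def by blast
  next
    fix x a y b assume "(x,a)\<in>\<Union>C" "(y,b)\<in>\<Union>C"
    then obtain G where "G\<in>C" "(x,a)\<in>G" "(y,b)\<in>G" using two by blast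
    thus "(x+y,a+b)\<in>\<Union>C" using CA unfolding hbgraph_def by blast
  next
    fix x a c assume "(x,a)\<in>\<Union>C"
    then obtain G where "G\<in>C" "(x,a)\<in>G" by blast
    thus "(c *\<^sub>R x, c*a)\<in>\<Union>C" using CA unfolding hbgraph_def by blast
  next
    fix x a assume "(x,a)\<in>\<Union>C"
    then obtain G where "G\<in>C" "(x,a)\<in>G" by blast
    thus "a \<le> p x" using CA unfolding hbgraph_def by blast
  qed
qed

lemma hbgraph_extend:
  assumes p: "sublin p" and G: "hbgraph p x0 G" and y: "y \<notin> fst ` G"
  shows "\<exists>G'. hbgraph p x0 G' \<and> G \<subseteq> G' \<and> G' \<noteq> G"
proof -
  have sv: "\<And>x a b. (x,a)\<in>G \<Longrightarrow> (x,b)\<in>G \<Longrightarrow> a = b"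
   and add: "\<And>x a y b. (x,a)\<in>G \<Longrightarrow> (y,b)\<in>G \<Longrightarrow> (x+y, a+b)\<in>G"
   and sc: "\<And>x a c. (x,a)\<in>G \<Longrightarrow> (c *\<^sub>R x, c*a) \<in> G"
   and dm: "\<And>x a. (x,a)\<in>G \<Longrightarrow> a \<le> p x"
   and g0: "(x0, p x0) \<in> G" using G unfolding hbgraph_def by blast+
  have padd: "\<And>u v. p (u + v) \<le> p u + p v" using p unfolding sublin_def by blast
  have psc: "\<And>c u. c > 0 \<Longrightarrow> p (c *\<^sub>R u) = c * p u" using p unfolding sublin_def by blast
  have key: "a - p (x - y) \<le> p (z + y) - b" if "(x,a)\<in>G" "(z,b)\<in>G" for x a z b
  proof -
    have "a + b \<le> p (x + z)" using dm[OF add[OF that]] .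
    also have "x + z = (x - y) + (z + y)" by simp
    finally show ?thesis using padd[of "x - y" "z + y"] by linarith
  qed
  define S where "S = {a - p (x - y) | x a. (x,a)\<in>G}"
  define c where "c = Sup S"
  have Sne: "S \<noteq> {}" using g0 unfolding S_def by blast
  have Sub: "\<And>s. s \<in> S \<Longrightarrow> s \<le> p (z + y) - b" if "(z,b)\<in>G" for z b
    using key that unfolding S_def by blast
  have bdd: "bdd_above S" using Sub[OF g0] by (meson bdd_aboveI)
  have c_up: "a - p (x - y) \<le> c" if "(x,a)\<in>G" for x a
    unfolding c_def by (rule cSup_upper[OF _ bdd]) (use that S_def in blast)
  have c_lo: "c \<le> p (z + y) - b" if "(z,b)\<in>G" for z b
    unfolding c_def by (rule cSup_least[OF Sne]) (use Sub[OF that] in blast)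
  define G' where "G' = {(x + t *\<^sub>R y, a + t * c) | x a t. (x,a)\<in>G}"
  have inv: "(u/t) *\<^sub>R x \<in> fst ` G" if "t \<noteq> 0" "x \<in> fst ` G" for x u t
    using that sc by force
  have hb': "hbgraph p x0 G'" unfolding hbgraph_def
  proof (intro conjI allI impI)
    show "(x0, p x0) \<in> G'" unfolding G'_def using g0 by force
  next
    fix x a b assume "(x,a)\<in>G'" "(x,b)\<in>G'"
    then obtain x1 a1 t1 x2 a2 t2 where e: "x = x1 + t1 *\<^sub>R y" "a = a1 + t1 * c" "(x1,a1)\<in>G"
      "x = x2 + t2 *\<^sub>R y" "b = a2 + t2 * c" "(x2,a2)\<in>G" unfolding G'_def by blast
    have "t1 = t2"
    proof (rule ccontr)
      assume ne: "t1 \<noteq> t2"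
      have "(x2 + (-1) *\<^sub>R x1, a2 + (-1)*a1) \<in> G" using add[OF e(6) sc[OF e(3)]] .
      hence "x2 - x1 \<in> fst ` G" by force
      hence "(1/(t1 - t2)) *\<^sub>R (x2 - x1) \<in> fst ` G" using inv[of "t1 - t2"] ne by auto
      moreover have "(1/(t1 - t2)) *\<^sub>R (x2 - x1) = y"
      proof -
        have "x2 - x1 = (t1 - t2) *\<^sub>R y" using e(1) e(4) by (simp add: algebra_simps)
        thus ?thesis using ne by simp
      qed
      ultimately show False using y by simp
    qed
    hence "x1 = x2" using e by simp
    hence "a1 = a2" using sv e by blast
    thus "a = b" using e \<open>t1 = t2\<close> by simp
  next
    fix x a z b assume "(x,a)\<in>G'" "(z,b)\<in>G'"
    then obtain x1 a1 t1 x2 a2 t2 where e: "x = x1 + t1 *\<^sub>R y" "a = a1 + t1 * c" "(x1,a1)\<in>G"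
      "z = x2 + t2 *\<^sub>R y" "b = a2 + t2 * c" "(x2,a2)\<in>G" unfolding G'_def by blast
    show "(x+z, a+b)\<in>G'" unfolding G'_def
      by (rule CollectI, rule exI[of _ "x1+x2"], rule exI[of _ "a1+a2"], rule exI[of _ "t1+t2"])
         (use e add in \<open>auto simp: algebra_simps\<close>)
  next
    fix x a d assume "(x,a)\<in>G'"
    then obtain x1 a1 t1 where e: "x = x1 + t1 *\<^sub>R y" "a = a1 + t1 * c" "(x1,a1)\<in>G"
      unfolding G'_def by blast
    show "(d *\<^sub>R x, d*a)\<in>G'" unfolding G'_def
      by (rule CollectI, rule exI[of _ "d *\<^sub>R x1"], rule exI[of _ "d*a1"], rule exI[of _ "d*t1"])
         (use e sc in \<open>auto simp: algebra_simps\<close>)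
  next
    fix x a assume "(x,a)\<in>G'"
    then obtain x1 a1 t where e: "x = x1 + t *\<^sub>R y" "a = a1 + t * c" "(x1,a1)\<in>G"
      unfolding G'_def by blast
    consider "t > 0" | "t = 0" | "t < 0" by linarith
    thus "a \<le> p x"
    proof cases
      case 1
      have m: "((1/t) *\<^sub>R x1, (1/t) * a1) \<in> G" using sc[OF e(3)] .
      have "c \<le> p ((1/t) *\<^sub>R x1 + y) - (1/t) * a1" using c_lo[OF m] .
      hence "t * c \<le> t * (p ((1/t) *\<^sub>R x1 + y) - (1/t) * a1)" using 1 by (simp add: mult_left_mono)
      hence "t * c \<le> t * p ((1/t) *\<^sub>R x1 + y) - a1" using 1 by (simp add: right_diff_distrib)
      also have "t * p ((1/t) *\<^sub>R x1 + y) = p (t *\<^sub>R ((1/t) *\<^sub>R x1 + y))" using psc[OF 1] by simp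
      also have "t *\<^sub>R ((1/t) *\<^sub>R x1 + y) = x" using e 1 by (simp add: scaleR_add_right)
      finally show ?thesis using e by simp
    next
      case 2 thus ?thesis using e dm by simp
    next
      case 3
      define s where "s = -t"
      have s: "s > 0" using 3 s_def by simp
      have m: "((1/s) *\<^sub>R x1, (1/s) * a1) \<in> G" using sc[OF e(3)] .
      have "(1/s) * a1 - p ((1/s) *\<^sub>R x1 - y) \<le> c" using c_up[OF m] .
      hence "s * ((1/s) * a1 - p ((1/s) *\<^sub>R x1 - y)) \<le> s * c" using s by (simp add: mult_left_mono)
      hence "a1 - s * p ((1/s) *\<^sub>R x1 - y) \<le> s * c" using s by (simp add: right_diff_distrib)
      moreover have "s * p ((1/s) *\<^sub>R x1 - y) = p (s *\<^sub>R ((1/s) *\<^sub>R x1 - y))" using psc[OF s] by simp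
      moreover have "s *\<^sub>R ((1/s) *\<^sub>R x1 - y) = x" using e s s_def by (simp add: scaleR_diff_right)
      ultimately show ?thesis using e s_def by simp
    qed
  qed
  have sub: "G \<subseteq> G'" unfolding G'_def by force
  have "(0::'a) \<in> fst ` G" using sc[OF g0, of 0] by force
  then obtain a0 where "(0, a0) \<in> G" by auto
  hence "(0 + 1 *\<^sub>R y, a0 + 1 * c) \<in> G'" unfolding G'_def by blast
  hence "(y, a0 + c) \<in> G'" by simp
  hence "G' \<noteq> G" using y by force
  thus ?thesis using hb' sub by blast
qed

theorem hahn_banach:
  fixes p :: "'v::real_vector \<Rightarrow> real"
  assumes p: "sublin p"
  shows "\<exists>L. (\<forall>x y. L (x + y) = L x + L y) \<and> (\<forall>c x. L (c *\<^sub>R x) = c * L x) \<and> (\<forall>x. L x \<le> p x) \<and> L x0 = p x0"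
proof -
  have "\<forall>C\<in>chains {G. hbgraph p x0 G}. \<exists>U\<in>{G. hbgraph p x0 G}. \<forall>X\<in>C. X \<subseteq> U"
  proof
    fix C assume C: "C \<in> chains {G. hbgraph p x0 G}"
    show "\<exists>U\<in>{G. hbgraph p x0 G}. \<forall>X\<in>C. X \<subseteq> U"
    proof (cases "C = {}")
      case True thus ?thesis using hb_init[OF p] by blast
    next
      case False thus ?thesis using hbgraph_union[OF C False] by blast
    qed
  qed
  from Zorn_Lemma2[OF this] obtain M where M: "hbgraph p x0 M"
    and max: "\<And>X. hbgraph p x0 X \<Longrightarrow> M \<subseteq> X \<Longrightarrow> X = M" by blast
  have dom: "x \<in> fst ` M" for x
  proof (rule ccontr)
    assume "x \<notin> fst ` M"
    from hbgraph_extend[OF p M this] max show False by blast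
  qed
  have sv: "\<And>x a b. (x,a)\<in>M \<Longrightarrow> (x,b)\<in>M \<Longrightarrow> a = b"
   and add: "\<And>x a y b. (x,a)\<in>M \<Longrightarrow> (y,b)\<in>M \<Longrightarrow> (x+y, a+b)\<in>M"
   and sc: "\<And>x a c. (x,a)\<in>M \<Longrightarrow> (c *\<^sub>R x, c*a) \<in> M"
   and dm: "\<And>x a. (x,a)\<in>M \<Longrightarrow> a \<le> p x"
   and g0: "(x0, p x0) \<in> M" using M unfolding hbgraph_def by blast+
  define L where "L x = (THE a. (x,a)\<in>M)" for x
  have inM: "(x, L x) \<in> M" for x
  proof -
    obtain a where "(x,a)\<in>M" using dom[of x] by auto
    thus ?thesis unfolding L_def by (rule theI) (use sv \<open>(x,a)\<in>M\<close> in blast)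
  qed
  have val: "L x = a" if "(x,a)\<in>M" for x a using sv[OF inM that] .
  show ?thesis
  proof (intro exI[of _ L] conjI allI)
    fix x y show "L (x+y) = L x + L y" using val[OF add[OF inM inM]] .
  next
    fix c x show "L (c *\<^sub>R x) = c * L x" using val[OF sc[OF inM]] .
  next
    fix x show "L x \<le> p x" using dm[OF inM] .
  next
    show "L x0 = p x0" using val[OF g0] .
  qed
qed



definition gaugef :: "'v::real_vector set \<Rightarrow> 'v \<Rightarrow> real" where
  "gaugef U v = Inf {t. t > 0 \<and> (1/t) *\<^sub>R v \<in> U}"

locale gset =
  fixes U :: "'v::real_vector set"
  assumes cvx: "convex U" and zero: "0 \<in> U" and absb: "\<And>v. \<exists>t>0. t *\<^sub>R v \<in> U"
begin

lemma ne: "{t. t > 0 \<and> (1/t) *\<^sub>R v \<in> U} \<noteq> {}"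
proof -
  obtain s where "s > 0" "s *\<^sub>R v \<in> U" using absb by blast
  hence "(1/(1/s)) *\<^sub>R v \<in> U" "1/s > 0" by simp_all
  thus ?thesis by blast
qed

lemma bdd: "bdd_below {t. t > 0 \<and> (1/t) *\<^sub>R v \<in> U}"
  by (rule bdd_belowI[of _ 0]) auto

lemma mono: assumes "t > 0" "(1/t) *\<^sub>R v \<in> U" "t \<le> s" shows "(1/s) *\<^sub>R v \<in> U"
proof -
  have s: "s > 0" using assms by simp
  have "(t/s) *\<^sub>R ((1/t) *\<^sub>R v) + (1 - t/s) *\<^sub>R 0 \<in> U"
    by (rule convexD[OF cvx assms(2) zero]) (use assms s in auto)
  moreover have "(t/s) *\<^sub>R ((1/t) *\<^sub>R v) = ((t/s)*(1/t)) *\<^sub>R v" by simp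
  moreover have "(t/s)*(1/t) = 1/s" using assms(1) by simp
  ultimately show ?thesis by (metis scaleR_zero_right add_0_right)
qed

lemma le: assumes "t > 0" "(1/t) *\<^sub>R v \<in> U" shows "gaugef U v \<le> t"
  unfolding gaugef_def by (rule cInf_lower[OF _ bdd]) (use assms in auto)

lemma ge0: "gaugef U v \<ge> 0"
  unfolding gaugef_def by (rule cInf_greatest[OF ne]) auto

lemma lt: assumes "gaugef U v < s" shows "(1/s) *\<^sub>R v \<in> U"
proof -
  obtain t where t: "t \<in> {t. t > 0 \<and> (1/t) *\<^sub>R v \<in> U}" "t < s"
    using cInf_lessD[OF ne assms[unfolded gaugef_def]] by blast
  thus ?thesis using mono[of t v s] by auto
qed

lemma eps_le: fixes a b :: real assumes "\<And>e. e > 0 \<Longrightarrow> a \<le> b + e" shows "a \<le> b"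
  using assms by (metis field_le_epsilon)

lemma subadd: "gaugef U (v + w) \<le> gaugef U v + gaugef U w"
proof (rule eps_le)
  fix e :: real assume e: "e > 0"
  define s where "s = gaugef U v + e/2"
  define t where "t = gaugef U w + e/2"
  have s: "s > 0" "(1/s) *\<^sub>R v \<in> U" using ge0[of v] e lt[of v s] unfolding s_def by auto
  have t: "t > 0" "(1/t) *\<^sub>R w \<in> U" using ge0[of w] e lt[of w t] unfolding t_def by auto
  have "(s/(s+t)) *\<^sub>R ((1/s) *\<^sub>R v) + (t/(s+t)) *\<^sub>R ((1/t) *\<^sub>R w) \<in> U"
    by (rule convexD[OF cvx s(2) t(2)]) (use s t in \<open>auto simp: add_divide_distrib[symmetric]\<close>)
  moreover have "(s/(s+t)) *\<^sub>R ((1/s) *\<^sub>R v) + (t/(s+t)) *\<^sub>R ((1/t) *\<^sub>R w) = (1/(s+t)) *\<^sub>R (v + w)"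
    using s t by (simp add: scaleR_add_right)
  ultimately have "gaugef U (v + w) \<le> s + t" using le[of "s+t"] s t by simp
  thus "gaugef U (v + w) \<le> gaugef U v + gaugef U w + e" unfolding s_def t_def by simp
qed

lemma scale_le: assumes c: "c > 0" shows "gaugef U (c *\<^sub>R v) \<le> c * gaugef U v"
proof (rule eps_le)
  fix e :: real assume e: "e > 0"
  define s where "s = gaugef U v + e/c"
  have "e/c > 0" using e c by simp
  hence s: "s > 0" "(1/s) *\<^sub>R v \<in> U" using ge0[of v] lt[of v s] unfolding s_def by auto
  have "(1 / (c * s)) *\<^sub>R (c *\<^sub>R v) = (1 / s) *\<^sub>R v" using c by simp
  hence "gaugef U (c *\<^sub>R v) \<le> c * s" using le[of "c * s" "c *\<^sub>R v"] s c by simp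
  thus "gaugef U (c *\<^sub>R v) \<le> c * gaugef U v + e" unfolding s_def using c by (simp add: algebra_simps)
qed

lemma scale: assumes c: "c > 0" shows "gaugef U (c *\<^sub>R v) = c * gaugef U v"
proof -
  have "gaugef U v = gaugef U ((1/c) *\<^sub>R (c *\<^sub>R v))" using c by simp
  also have "\<dots> \<le> (1/c) * gaugef U (c *\<^sub>R v)" using scale_le[of "1/c" "c *\<^sub>R v"] c by simp
  finally have "gaugef U v \<le> (1/c) * gaugef U (c *\<^sub>R v)" .
  hence "c * gaugef U v \<le> c * ((1/c) * gaugef U (c *\<^sub>R v))" by (rule mult_left_mono) (use c in auto)
  hence "c * gaugef U v \<le> gaugef U (c *\<^sub>R v)" using c by simp
  thus ?thesis using scale_le[OF c, of v] by simp
qed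

lemma sublin: "sublin (gaugef U)"
  unfolding sublin_def using subadd scale by blast

lemma in_le1: "u \<in> U \<Longrightarrow> gaugef U u \<le> 1"
  using le[of 1 u] by simp

lemma notin_ge1: "z \<notin> U \<Longrightarrow> gaugef U z \<ge> 1"
  using lt[of z 1] by force

end

theorem sep_alg:
  fixes U :: "'v::real_vector set"
  assumes "convex U" "0 \<in> U" "\<And>v. \<exists>t>0. t *\<^sub>R v \<in> U" "z \<notin> U"
  shows "\<exists>L. (\<forall>x y. L (x + y) = L x + L y) \<and> (\<forall>c x. L (c *\<^sub>R x) = c * L x)
     \<and> (\<forall>x. L x \<le> gaugef U x) \<and> (\<forall>u\<in>U. L u \<le> 1) \<and> L z \<ge> 1"
proof -
  interpret gset U using assms(1-3) by unfold_locales auto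
  obtain L where L: "\<forall>x y. L (x + y) = L x + L y" "\<forall>c x. L (c *\<^sub>R x) = c * L x"
    "\<forall>x. L x \<le> gaugef U x" "L z = gaugef U z"
    using hahn_banach[OF sublin, of z] by blast
  show ?thesis using L in_le1 notin_ge1[OF assms(4)] by (intro exI[of _ L]) (auto intro: order_trans)
qed

lemma gauge_norm:
  fixes U :: "'v::real_normed_vector set"
  assumes "gset U" and r: "r > 0" and B: "ball 0 r \<subseteq> U"
  shows "gaugef U v \<le> norm v / r"
proof -
  interpret gset U by fact
  show ?thesis
  proof (rule eps_le)
    fix e :: real assume e: "e > 0"
    define s where "s = norm v / r + e"
    have s: "s > 0" unfolding s_def using e r by (simp add: add_nonneg_pos)
    have "norm ((1/s) *\<^sub>R v) = norm v / s" using s by simp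
    also have "\<dots> < r"
    proof -
      have "norm v < r * s" unfolding s_def using r e by (simp add: algebra_simps)
      thus ?thesis using s by (simp add: divide_less_eq mult.commute)
    qed
    finally have "(1/s) *\<^sub>R v \<in> U" using B by auto
    thus "gaugef U v \<le> norm v / r + e" using le[OF s] unfolding s_def by simp
  qed
qed

theorem sep_normed:
  fixes A B :: "'v::real_normed_vector set"
  assumes A: "convex A" "A \<noteq> {}" and B: "convex B" "ball b0 r \<subseteq> B" "r > 0"
    and dis: "A \<inter> B = {}"
  shows "\<exists>\<phi>::'v \<Rightarrow>\<^sub>L real. \<phi> \<noteq> 0 \<and> (\<forall>a\<in>A. \<forall>b\<in>B. blinfun_apply \<phi> a \<le> blinfun_apply \<phi> b)"
proof -
  obtain a0 where a0: "a0 \<in> A" using A by auto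
  define K where "K = (\<Union>x\<in>B. \<Union>y\<in>A. {x - y})"
  define k0 where "k0 = b0 - a0"
  define U where "U = (\<lambda>k. k - k0) ` K"
  have cK: "convex K" unfolding K_def by (rule convex_differences[OF B(1) A(1)])
  have cU: "convex U" unfolding U_def by (rule convex_translation_subtract[OF cK])
  have ball: "ball 0 r \<subseteq> U"
  proof
    fix v :: 'v assume "v \<in> ball 0 r"
    hence "b0 + v \<in> B" using B(2) by (auto simp: dist_norm)
    hence "(b0 + v) - a0 \<in> K" unfolding K_def using a0 by blast
    moreover have "v = ((b0 + v) - a0) - k0" unfolding k0_def by simp
    ultimately show "v \<in> U" unfolding U_def by blast
  qed
  have z0: "0 \<in> U" using ball B(3) by auto
  have absb: "\<exists>t>0. t *\<^sub>R v \<in> U" for v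
  proof (cases "v = 0")
    case True thus ?thesis using z0 by (intro exI[of _ 1]) auto
  next
    case False
    define t where "t = r / (2 * norm v)"
    have t: "t > 0" using False B(3) unfolding t_def by simp
    have "norm (t *\<^sub>R v) = r/2" using False t B(3) unfolding t_def by simp
    hence "t *\<^sub>R v \<in> ball 0 r" using B(3) by simp
    thus ?thesis using ball t by blast
  qed
  have zn: "- k0 \<notin> U"
  proof
    assume "- k0 \<in> U"
    then obtain k where "k \<in> K" "-k0 = k - k0" unfolding U_def by blast
    hence "0 \<in> K" by simp
    thus False using dis unfolding K_def by auto
  qed
  obtain L where L: "\<forall>x y. L (x + y) = L x + L y" "\<forall>c x. L (c *\<^sub>R x) = c * L x"
     "\<forall>x. L x \<le> gaugef U x" "\<forall>u\<in>U. L u \<le> 1" "L (-k0) \<ge> 1"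
    using sep_alg[OF cU z0 absb zn] by blast
  have gs: "gset U" by unfold_locales (use cU z0 absb in auto)
  have Lneg: "L (- x) = - L x" for x using L(2)[rule_format, of "-1" x] by simp
  have Lb: "norm (L x) \<le> norm x * (1/r)" for x
  proof -
    have "L x \<le> norm x / r" using L(3) gauge_norm[OF gs B(3) ball, of x] by (meson order_trans)
    moreover have "- L x \<le> norm x / r" using L(3) gauge_norm[OF gs B(3) ball, of "-x"] Lneg[of x]
      by (metis norm_minus_cancel order_trans)
    ultimately show ?thesis by auto
  qed
  have bl: "bounded_linear (\<lambda>x. - L x)"
    by (rule bounded_linear_intro[where K = "1/r"]) (use L(1,2) Lb in auto)
  define \<phi> where "\<phi> = Blinfun (\<lambda>x. - L x)"
  have phi: "blinfun_apply \<phi> x = - L x" for x unfolding \<phi>_def using bounded_linear_Blinfun_apply[OF bl] by simp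
  have Lk: "L k \<le> 0" if "k \<in> K" for k
  proof -
    have "k - k0 \<in> U" unfolding U_def using that by blast
    hence "L (k - k0) \<le> 1" using L(4) by blast
    moreover have "L (k - k0) = L k + L (-k0)" using L(1) by (metis diff_conv_add_uminus)
    ultimately show ?thesis using L(5) by linarith
  qed
  show ?thesis
  proof (intro exI[of _ \<phi>] conjI ballI)
    show "\<phi> \<noteq> 0"
    proof
      assume "\<phi> = 0"
      hence "blinfun_apply \<phi> (-k0) = 0" by simp
      thus False using phi[of "-k0"] L(5) by simp
    qed
  next
    fix a b assume "a \<in> A" "b \<in> B"
    hence "b - a \<in> K" unfolding K_def by blast
    hence "L (b - a) \<le> 0" by (rule Lk)
    moreover have "L (b - a) = L b - L a" using L(1) Lneg by (metis diff_conv_add_uminus)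
    ultimately show "blinfun_apply \<phi> a \<le> blinfun_apply \<phi> b" using phi by simp
  qed
qed



lemma real_eps_le: fixes a b :: real assumes "\<And>e. e > 0 \<Longrightarrow> a \<le> b + e" shows "a \<le> b"
  using assms by (metis field_le_epsilon)

lemma blin_above_zero:
  fixes \<phi> :: "'a::real_normed_vector \<Rightarrow>\<^sub>L real"
  assumes "\<And>z. blinfun_apply \<phi> z \<le> c" shows "\<phi> = 0"
proof (rule blinfun_eqI)
  fix z
  show "blinfun_apply \<phi> z = blinfun_apply 0 z"
  proof (rule ccontr)
    assume "blinfun_apply \<phi> z \<noteq> blinfun_apply 0 z"
    hence nz: "blinfun_apply \<phi> z \<noteq> 0" by simp
    have "blinfun_apply \<phi> (((c+1) / blinfun_apply \<phi> z) *\<^sub>R z) = c + 1"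
      using nz by (simp add: blinfun.scaleR_right)
    thus False using assms[of "((c+1) / blinfun_apply \<phi> z) *\<^sub>R z"] by simp
  qed
qed

lemma blin_below_zero:
  fixes \<phi> :: "'a::real_normed_vector \<Rightarrow>\<^sub>L real"
  assumes "\<And>z. c \<le> blinfun_apply \<phi> z" shows "\<phi> = 0"
proof -
  have "- \<phi> = 0" by (rule blin_above_zero[of _ "-c"]) (use assms in \<open>auto simp: blinfun.minus_left\<close>)
  thus ?thesis by simp
qed

lemma blin_pair:
  fixes \<phi> :: "('a::real_normed_vector \<times> real) \<Rightarrow>\<^sub>L real"
  shows "blinfun_apply \<phi> (x, r) = blinfun_apply \<phi> (x, 0) + r * blinfun_apply \<phi> (0, 1)"
proof -
  have "(x, r) = (x, 0) + r *\<^sub>R (0, 1)" by simp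
  hence "blinfun_apply \<phi> (x, r) = blinfun_apply \<phi> ((x, 0) + r *\<^sub>R (0, 1))" by simp
  also have "\<dots> = blinfun_apply \<phi> (x, 0) + blinfun_apply \<phi> (r *\<^sub>R (0, 1))"
    by (rule blinfun.add_right)
  also have "\<dots> = blinfun_apply \<phi> (x, 0) + r * blinfun_apply \<phi> (0, 1)"
    by (subst blinfun.scaleR_right) simp
  finally show ?thesis .
qed

lemma blin_first:
  fixes \<phi> :: "('a::real_normed_vector \<times> real) \<Rightarrow>\<^sub>L real"
  shows "bounded_linear (\<lambda>x. blinfun_apply \<phi> (x, 0) / s)"
proof -
  have "bounded_linear (\<lambda>x::'a. (x, 0::real))"
    by (rule bounded_linear_Pair[OF bounded_linear_ident bounded_linear_zero])
  hence "bounded_linear (\<lambda>x. blinfun_apply \<phi> (x, 0))"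
    using bounded_linear_compose[OF blinfun.bounded_linear_right] by blast
  thus ?thesis using bounded_linear_compose[OF bounded_linear_divide] by blast
qed

theorem sumrule:
  fixes D :: "'a::real_normed_vector set" and g h :: "'a \<Rightarrow> real"
  assumes D: "convex D" "D \<noteq> {}" and g: "convex_on D g"
    and h: "convex_on UNIV h" "continuous_on UNIV h"
    and bnd: "\<And>x. x \<in> D \<Longrightarrow> \<alpha> \<le> g x + h x"
  shows "\<exists>y::'a \<Rightarrow>\<^sub>L real. \<exists>T0 T1. (\<forall>x\<in>D. blinfun_apply y x - g x \<le> T0)
          \<and> (\<forall>z. - blinfun_apply y z - h z \<le> T1) \<and> T0 + T1 \<le> - \<alpha>"
proof -
  define A where "A = {(x, r). x \<in> D \<and> r \<le> \<alpha> - g x}"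
  define B where "B = {(z, r). h z < r}"
  have cA: "convex A" unfolding convex_alt
  proof (intro ballI allI impI)
    fix p q :: "'a \<times> real" and u :: real assume "p \<in> A" "q \<in> A" and u: "0 \<le> u \<and> u \<le> 1"
    then obtain x1 r1 x2 r2 where pq: "p = (x1, r1)" "q = (x2, r2)" "x1 \<in> D" "x2 \<in> D"
      "r1 \<le> \<alpha> - g x1" "r2 \<le> \<alpha> - g x2" unfolding A_def by auto
    have xin: "(1 - u) *\<^sub>R x1 + u *\<^sub>R x2 \<in> D" using convexD_alt[OF D(1) pq(3,4)] u by auto
    have "g ((1 - u) *\<^sub>R x1 + u *\<^sub>R x2) \<le> (1 - u) * g x1 + u * g x2"
      using convex_onD[OF g] u pq(3,4) by auto
    moreover have "(1 - u) * r1 + u * r2 \<le> (1 - u) * (\<alpha> - g x1) + u * (\<alpha> - g x2)"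
      using u pq(5,6) by (intro add_mono mult_left_mono) auto
    ultimately have "(1 - u) * r1 + u * r2 \<le> \<alpha> - g ((1 - u) *\<^sub>R x1 + u *\<^sub>R x2)"
      by (simp add: algebra_simps)
    thus "(1 - u) *\<^sub>R p + u *\<^sub>R q \<in> A" unfolding A_def pq using xin by simp
  qed
  have cB: "convex B" unfolding convex_alt
  proof (intro ballI allI impI)
    fix p q :: "'a \<times> real" and u :: real assume "p \<in> B" "q \<in> B" and u: "0 \<le> u \<and> u \<le> 1"
    then obtain x1 r1 x2 r2 where pq: "p = (x1, r1)" "q = (x2, r2)"
      "h x1 < r1" "h x2 < r2" unfolding B_def by auto
    have "h ((1 - u) *\<^sub>R x1 + u *\<^sub>R x2) \<le> (1 - u) * h x1 + u * h x2"
      using convex_onD[OF h(1)] u by auto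
    moreover have "(1 - u) * h x1 + u * h x2 < (1 - u) * r1 + u * r2"
    proof (cases "u = 0")
      case True thus ?thesis using pq by simp
    next
      case False
      have "(1 - u) * h x1 \<le> (1 - u) * r1" using u pq by (intro mult_left_mono) auto
      moreover have "u * h x2 < u * r2" using u pq False by simp
      ultimately show ?thesis by simp
    qed
    ultimately show "(1 - u) *\<^sub>R p + u *\<^sub>R q \<in> B" unfolding B_def pq by simp
  qed
  obtain x0 where x0: "x0 \<in> D" using D by auto
  have Ane: "A \<noteq> {}" unfolding A_def using x0 by auto
  obtain \<delta> where \<delta>: "\<delta> > 0" "\<And>z. dist z 0 < \<delta> \<Longrightarrow> dist (h z) (h 0) < 1/2"
    using h(2) unfolding continuous_on_iff by (metis UNIV_I half_gt_zero_iff zero_less_one)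
  define \<rho> where "\<rho> = min \<delta> (1/2)"
  have \<rho>: "\<rho> > 0" unfolding \<rho>_def using \<delta> by simp
  have ball: "ball (0, h 0 + 1) \<rho> \<subseteq> B"
  proof
    fix p :: "'a \<times> real" assume p: "p \<in> ball (0, h 0 + 1) \<rho>"
    obtain z r where zr: "p = (z, r)" by fastforce
    have "dist z 0 < \<delta>" using dist_fst_le[of "(0::'a, h 0 + 1)" p] p zr \<rho>_def
      by (simp add: dist_commute)
    hence "\<bar>h z - h 0\<bar> < 1/2" using \<delta>(2)[of z] by (simp add: dist_real_def)
    hence "h z < h 0 + 1/2" by linarith
    moreover have "dist r (h 0 + 1) < 1/2" using dist_snd_le[of p "(0::'a, h 0 + 1)"] p zr \<rho>_def
      by (simp add: dist_commute)
    ultimately have "h z < r" unfolding dist_real_def by linarith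
    thus "p \<in> B" unfolding B_def zr by simp
  qed
  have dis: "A \<inter> B = {}"
  proof -
    have False if "(x, r) \<in> A" "(x, r) \<in> B" for x r
      using that bnd[of x] unfolding A_def B_def by simp
    thus ?thesis by auto
  qed
  obtain \<phi> :: "('a \<times> real) \<Rightarrow>\<^sub>L real" where \<phi>: "\<phi> \<noteq> 0"
    "\<And>a b. a \<in> A \<Longrightarrow> b \<in> B \<Longrightarrow> blinfun_apply \<phi> a \<le> blinfun_apply \<phi> b"
    using sep_normed[OF cA Ane cB ball \<rho> dis] by blast
  define \<psi> where "\<psi> x = blinfun_apply \<phi> (x, 0)" for x
  define s where "s = blinfun_apply \<phi> (0, 1)"
  have ineq: "\<psi> x + r * s \<le> \<psi> z + r' * s" if "x \<in> D" "r \<le> \<alpha> - g x" "h z < r'" for x r z r'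
    using \<phi>(2)[of "(x, r)" "(z, r')"] that blin_pair[of \<phi> x r] blin_pair[of \<phi> z r'] unfolding A_def B_def \<psi>_def s_def by simp
  have s0: "s \<ge> 0"
  proof (rule ccontr)
    assume "\<not> s \<ge> 0"
    hence s: "s < 0" by simp
    define K where "K = \<bar>\<psi> x0 + (\<alpha> - g x0) * s - \<psi> 0\<bar> + 1"
    define r' where "r' = \<bar>h 0\<bar> + 1 + K / (- s)"
    have "K / (- s) > 0" unfolding K_def using s by (intro divide_pos_pos) auto
    hence "h 0 < r'" unfolding r'_def by linarith
    from ineq[OF x0 order_refl this] have "\<psi> x0 + (\<alpha> - g x0) * s \<le> \<psi> 0 + r' * s" .
    moreover have "r' * s = (\<bar>h 0\<bar> + 1) * s - K" unfolding r'_def using s by (simp add: algebra_simps)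
    moreover have "(\<bar>h 0\<bar> + 1) * s \<le> 0" using s by (simp add: mult_nonneg_nonpos)
    ultimately show False unfolding K_def by linarith
  qed
  have spos: "s > 0"
  proof (rule ccontr)
    assume "\<not> s > 0"
    hence s: "s = 0" using s0 by simp
    define \<psi>' where "\<psi>' = Blinfun (\<lambda>x. blinfun_apply \<phi> (x, 0) / 1)"
    have \<psi>': "blinfun_apply \<psi>' x = \<psi> x" for x
      unfolding \<psi>'_def \<psi>_def using bounded_linear_Blinfun_apply[OF blin_first[of \<phi> 1]] by simp
    have "\<psi> x0 \<le> \<psi> z" for z using ineq[OF x0 order_refl, of z "h z + 1"] s by simp
    hence "\<psi>' = 0" using blin_below_zero[of "\<psi> x0" \<psi>'] \<psi>' by simp
    hence "\<psi> x = 0" for x using \<psi>'[of x] by simp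
    have "\<phi> = 0"
    proof (rule blinfun_eqI)
      fix p :: "'a \<times> real"
      obtain x r where "p = (x, r)" by fastforce
      thus "blinfun_apply \<phi> p = blinfun_apply 0 p" using blin_pair[of \<phi> x r] s \<open>\<And>x. \<psi> x = 0\<close>
        unfolding \<psi>_def s_def by simp
    qed
    thus False using \<phi>(1) by simp
  qed
  define y where "y = Blinfun (\<lambda>x. blinfun_apply \<phi> (x, 0) / s)"
  have y: "blinfun_apply y x = \<psi> x / s" for x
    unfolding y_def \<psi>_def using bounded_linear_Blinfun_apply[OF blin_first[of \<phi> s]] by simp
  have key: "(blinfun_apply y x - g x) + (- blinfun_apply y z - h z) \<le> - \<alpha>" if x: "x \<in> D" for x z
  proof (rule real_eps_le)
    fix e :: real assume e: "e > 0"
    have "\<psi> x + (\<alpha> - g x) * s \<le> \<psi> z + (h z + e) * s" using ineq[OF x order_refl] e by simp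
    hence "(\<psi> x + (\<alpha> - g x) * s) / s \<le> (\<psi> z + (h z + e) * s) / s" using spos by (simp add: divide_right_mono)
    hence "\<psi> x / s + (\<alpha> - g x) \<le> \<psi> z / s + (h z + e)" using spos by (simp add: add_divide_distrib)
    thus "blinfun_apply y x - g x + (- blinfun_apply y z - h z) \<le> - \<alpha> + e" using y by simp
  qed
  define T1 where "T1 = Sup (range (\<lambda>z. - blinfun_apply y z - h z))"
  have bddT: "bdd_above (range (\<lambda>z. - blinfun_apply y z - h z))"
    using key[OF x0] by (intro bdd_aboveI[of _ "- \<alpha> - (blinfun_apply y x0 - g x0)"]) (auto simp: algebra_simps)
  have T1: "- blinfun_apply y z - h z \<le> T1" for z unfolding T1_def by (rule cSup_upper[OF _ bddT]) auto
  have T0: "blinfun_apply y x - g x \<le> - \<alpha> - T1" if "x \<in> D" for x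
  proof -
    have "T1 \<le> - \<alpha> - (blinfun_apply y x - g x)" unfolding T1_def
      by (rule cSup_least) (use key[OF that] in \<open>auto simp: algebra_simps\<close>)
    thus ?thesis by simp
  qed
  show ?thesis using T0 T1 by (intro exI[of _ y] exI[of _ "- \<alpha> - T1"] exI[of _ T1]) auto
qed



lemma convex_on_minus_blin:
  fixes y :: "'a::real_normed_vector \<Rightarrow>\<^sub>L real"
  assumes "convex_on D g"
  shows "convex_on D (\<lambda>x. g x - blinfun_apply y x)"
proof (rule convex_onI)
  show "convex D" using assms by (simp add: convex_on_def)
next
  fix t :: real and x z :: 'a assume t: "0 < t" "t < 1" and xz: "x \<in> D" "z \<in> D"
  have "g ((1 - t) *\<^sub>R x + t *\<^sub>R z) \<le> (1 - t) * g x + t * g z"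
    using convex_onD[OF assms] t xz by simp
  moreover have "blinfun_apply y ((1 - t) *\<^sub>R x + t *\<^sub>R z) = (1 - t) * blinfun_apply y x + t * blinfun_apply y z"
    by (simp add: blinfun.add_right blinfun.scaleR_right)
  ultimately show "g ((1 - t) *\<^sub>R x + t *\<^sub>R z) - blinfun_apply y ((1 - t) *\<^sub>R x + t *\<^sub>R z)
     \<le> (1 - t) * (g x - blinfun_apply y x) + t * (g z - blinfun_apply y z)"
    by (simp add: algebra_simps)
qed

lemma ind:
  fixes D :: "'a::real_normed_vector set" and H :: "nat \<Rightarrow> 'a \<Rightarrow> real"
  assumes D: "convex D" "D \<noteq> {}"
    and H: "\<And>i. i \<in> {1..k} \<Longrightarrow> convex_on UNIV (H i) \<and> continuous_on UNIV (H i)"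
  shows "convex_on D g \<Longrightarrow> (\<And>x. x \<in> D \<Longrightarrow> \<alpha> \<le> g x + (\<Sum>i=1..k. H i x)) \<Longrightarrow>
    \<exists>y0 (y::nat \<Rightarrow> ('a \<Rightarrow>\<^sub>L real)) T0 T. y0 + (\<Sum>i=1..k. y i) = 0
      \<and> (\<forall>x\<in>D. blinfun_apply y0 x - g x \<le> T0)
      \<and> (\<forall>i\<in>{1..k}. \<forall>z. blinfun_apply (y i) z - H i z \<le> T i)
      \<and> T0 + (\<Sum>i=1..k. T i) \<le> - \<alpha>"
  using H
proof (induction k arbitrary: g \<alpha>)
  case 0
  show ?case
    by (rule exI[of _ 0], rule exI[of _ "\<lambda>_. 0"], rule exI[of _ "- \<alpha>"], rule exI[of _ "\<lambda>_. 0"])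
       (use 0 in auto)
next
  case (Suc k)
  have Hk: "convex_on UNIV (H (Suc k))" "continuous_on UNIV (H (Suc k))" using Suc.prems(3)[of "Suc k"] by auto
  define g' where "g' x = g x + H (Suc k) x" for x
  have cg': "convex_on D g'" unfolding g'_def
    using Suc.prems(1) convex_on_subset[OF Hk(1) subset_UNIV D(1)] by (rule convex_on_add)
  have b': "\<alpha> \<le> g' x + (\<Sum>i=1..k. H i x)" if "x \<in> D" for x
    using Suc.prems(2)[OF that] unfolding g'_def by (simp add: algebra_simps)
  obtain y0' y' T0' T' where IH: "y0' + (\<Sum>i=1..k. y' i) = 0"
      "\<forall>x\<in>D. blinfun_apply y0' x - g' x \<le> T0'"
      "\<forall>i\<in>{1..k}. \<forall>z. blinfun_apply (y' i) z - H i z \<le> T' i"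
      "T0' + (\<Sum>i=1..k. T' i) \<le> - \<alpha>"
    using Suc.IH[OF cg' b'] Suc.prems(3) by force
  have cg'': "convex_on D (\<lambda>x. g x - blinfun_apply y0' x)" by (rule convex_on_minus_blin[OF Suc.prems(1)])
  have b'': "- T0' \<le> (g x - blinfun_apply y0' x) + H (Suc k) x" if "x \<in> D" for x
    using IH(2) that unfolding g'_def by auto
  obtain u S0 S1 where u: "\<forall>x\<in>D. blinfun_apply u x - (g x - blinfun_apply y0' x) \<le> S0"
    "\<forall>z. - blinfun_apply u z - H (Suc k) z \<le> S1" "S0 + S1 \<le> - (- T0')"
    using sumrule[OF D cg'' Hk b''] by blast
  define y where "y = y'(Suc k := - u)"
  define T where "T = T'(Suc k := S1)"
  have e1: "(\<Sum>i=1..k. y i) = (\<Sum>i=1..k. y' i)" unfolding y_def by (rule sum.cong) auto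
  have e2: "(\<Sum>i=1..k. T i) = (\<Sum>i=1..k. T' i)" unfolding T_def by (rule sum.cong) auto
  have sy: "(\<Sum>i=1..Suc k. y i) = (\<Sum>i=1..k. y' i) + - u"
    using e1 by (simp add: sum.cl_ivl_Suc y_def)
  have sT: "(\<Sum>i=1..Suc k. T i) = (\<Sum>i=1..k. T' i) + S1"
    using e2 by (simp add: sum.cl_ivl_Suc T_def)
  show ?case
  proof (rule exI[of _ "u + y0'"], rule exI[of _ y], rule exI[of _ S0], rule exI[of _ T], intro conjI)
    have "u + y0' + (\<Sum>i=1..Suc k. y i) = u + y0' + ((\<Sum>i=1..k. y' i) + - u)" by (simp only: sy)
    also have "\<dots> = y0' + (\<Sum>i=1..k. y' i)" by (simp add: algebra_simps)
    also have "\<dots> = 0" by (rule IH(1))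
    finally show "u + y0' + (\<Sum>i=1..Suc k. y i) = 0" .
  next
    show "\<forall>x\<in>D. blinfun_apply (u + y0') x - g x \<le> S0" using u(1) by (simp add: blinfun.add_left algebra_simps)
  next
    show "\<forall>i\<in>{1..Suc k}. \<forall>z. blinfun_apply (y i) z - H i z \<le> T i"
    proof (intro ballI allI)
      fix i z assume i: "i \<in> {1..Suc k}"
      show "blinfun_apply (y i) z - H i z \<le> T i"
      proof (cases "i = Suc k")
        case True thus ?thesis using u(2) unfolding y_def T_def by (simp add: blinfun.minus_left)
      next
        case False hence "i \<in> {1..k}" using i by auto
        thus ?thesis using IH(3) False unfolding y_def T_def by simp
      qed
    qed
  next
    show "S0 + (\<Sum>i=1..Suc k. T i) \<le> - \<alpha>" using sT u(3) IH(4) by simp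
  qed
qed



lemma epi_closed:
  fixes f0 :: "'a::real_normed_vector \<Rightarrow> ereal"
  assumes "lsc_ext f0"
  shows "closed {(x, r::real). f0 x \<le> ereal r}"
proof -
  have "open (- {(x, r::real). f0 x \<le> ereal r})" unfolding open_prod_def
  proof (intro ballI)
    fix p assume "p \<in> - {(x, r::real). f0 x \<le> ereal r}"
    then obtain x r where p: "p = (x, r)" "ereal r < f0 x" by (cases p) auto
    obtain r'' where r'': "ereal r < ereal r''" "ereal r'' < f0 x" using ereal_dense2[OF p(2)] by blast
    define A where "A = - {y. f0 y \<le> ereal r''}"
    have oA: "open A" unfolding A_def using assms unfolding lsc_ext_def by auto
    show "\<exists>A B. open A \<and> open B \<and> p \<in> A \<times> B \<and> A \<times> B \<subseteq> - {(x, r::real). f0 x \<le> ereal r}"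
    proof (intro exI[of _ A] exI[of _ "{..<r''}"] conjI)
      show "p \<in> A \<times> {..<r''}" using p r'' unfolding A_def by auto
      show "A \<times> {..<r''} \<subseteq> - {(x, r::real). f0 x \<le> ereal r}"
      proof
        fix q assume "q \<in> A \<times> {..<r''}"
        then obtain y s where q: "q = (y, s)" "ereal r'' < f0 y" "s < r''" unfolding A_def by (cases q) (auto simp: not_le)
        have "ereal s < ereal r''" using q(3) by simp
        hence "ereal s < f0 y" using q(2) by (rule less_trans)
        thus "q \<in> - {(x, r::real). f0 x \<le> ereal r}" using q by auto
      qed
    qed (use oA in auto)
  qed
  thus ?thesis by (simp add: closed_def)
qed

lemma affine_minorant:
  fixes f0 :: "'a::real_normed_vector \<Rightarrow> ereal"
  assumes pr: "proper_fun f0" and cv: "convex_ext f0" and ls: "lsc_ext f0"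
  shows "\<exists>u::'a \<Rightarrow>\<^sub>L real. \<exists>c. \<forall>x. ereal (blinfun_apply u x + c) \<le> f0 x"
proof -
  define E where "E = {(x, r::real). f0 x \<le> ereal r}"
  have cE: "convex E" using cv unfolding convex_ext_def E_def .
  have clE: "closed E" unfolding E_def by (rule epi_closed[OF ls])
  obtain x0 where x0: "f0 x0 \<noteq> \<infinity>" using pr unfolding proper_fun_def by blast
  have "f0 x0 \<noteq> -\<infinity>" using pr unfolding proper_fun_def by blast
  then obtain a where a: "f0 x0 = ereal a" using x0 by (cases "f0 x0") auto
  define P where "P = (x0, a - 1)"
  have "P \<in> - E" unfolding P_def E_def using a by simp
  moreover have "open (- E)" using clE by (simp add: open_Compl)
  ultimately obtain \<delta> where \<delta>: "\<delta> > 0" "ball P \<delta> \<subseteq> - E" using open_contains_ball by blast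
  have "(x0, a) \<in> E" unfolding E_def using a by simp
  hence Ene: "E \<noteq> {}" by blast
  have dis: "E \<inter> ball P \<delta> = {}" using \<delta> by auto
  obtain \<phi> :: "('a \<times> real) \<Rightarrow>\<^sub>L real" where \<phi>: "\<phi> \<noteq> 0"
    "\<And>e b. e \<in> E \<Longrightarrow> b \<in> ball P \<delta> \<Longrightarrow> blinfun_apply \<phi> e \<le> blinfun_apply \<phi> b"
    using sep_normed[OF cE Ene convex_ball order_refl \<delta>(1) dis] by blast
  define \<psi> where "\<psi> x = blinfun_apply \<phi> (x, 0)" for x
  define s where "s = blinfun_apply \<phi> (0, 1)"
  have PB: "P \<in> ball P \<delta>" using \<delta> by simp
  have ineq: "\<psi> x + r * s \<le> \<psi> x0 + (a - 1) * s" if "f0 x \<le> ereal r" for x r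
    using \<phi>(2)[OF _ PB, of "(x, r)"] that blin_pair[of \<phi> x r] blin_pair[of \<phi> x0 "a - 1"]
    unfolding E_def P_def \<psi>_def s_def by simp
  have "\<psi> x0 + a * s \<le> \<psi> x0 + (a - 1) * s" using ineq[of x0 a] a by simp
  hence s0: "s \<le> 0" by (simp add: algebra_simps)
  have sneg: "s < 0"
  proof (rule ccontr)
    assume "\<not> s < 0"
    hence s: "s = 0" using s0 by simp
    have loc: "\<psi> x0 \<le> \<psi> (x0 + w)" if "norm w < \<delta>" for w
    proof -
      have "(x0 + w, a - 1) \<in> ball P \<delta>" unfolding P_def using that
        by (simp add: dist_norm)
      from \<phi>(2)[OF _ this, of "(x0, a)"] show ?thesis
        using a blin_pair[of \<phi> x0 a] blin_pair[of \<phi> "x0 + w" "a - 1"] s unfolding E_def \<psi>_def s_def by simp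
    qed
    have lin: "\<psi> (x + z) = \<psi> x + \<psi> z" "\<psi> (c *\<^sub>R x) = c * \<psi> x" for x z c
    proof -
      have "(x + z, 0::real) = (x, 0) + (z, 0)" by simp
      thus "\<psi> (x + z) = \<psi> x + \<psi> z" unfolding \<psi>_def by (metis blinfun.add_right)
      have "(c *\<^sub>R x, 0::real) = c *\<^sub>R (x, 0)" by simp
      thus "\<psi> (c *\<^sub>R x) = c * \<psi> x" unfolding \<psi>_def by (metis blinfun.scaleR_right real_scaleR_def)
    qed
    have pos: "\<psi> w \<ge> 0" if "norm w < \<delta>" for w using loc[OF that] lin(1) by simp
    have zero: "\<psi> w = 0" for w
    proof (cases "w = 0")
      case True thus ?thesis using lin(2)[of 0 w] by simp
    next
      case False
      define t where "t = \<delta> / (2 * norm w)"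
      have t: "t > 0" unfolding t_def using False \<delta> by simp
      have n1: "norm (t *\<^sub>R w) < \<delta>" unfolding t_def using False \<delta> by simp
      have n2: "norm ((- t) *\<^sub>R w) < \<delta>" unfolding t_def using False \<delta> by simp
      have "t * \<psi> w \<ge> 0" using pos[OF n1] lin(2)[of t w] by simp
      moreover have "- t * \<psi> w \<ge> 0" using pos[OF n2] lin(2)[of "- t" w] by simp
      ultimately have "t * \<psi> w = 0" by (simp only: minus_mult_left)
      thus ?thesis using t by simp
    qed
    have "\<phi> = 0"
    proof (rule blinfun_eqI)
      fix p :: "'a \<times> real"
      obtain x r where "p = (x, r)" by fastforce
      thus "blinfun_apply \<phi> p = blinfun_apply 0 p" using blin_pair[of \<phi> x r] s zero
        unfolding \<psi>_def s_def by simp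
    qed
    thus False using \<phi>(1) by simp
  qed
  define u where "u = Blinfun (\<lambda>x. blinfun_apply \<phi> (x, 0) / (- s))"
  have u: "blinfun_apply u x = \<psi> x / (- s)" for x
    unfolding u_def \<psi>_def using bounded_linear_Blinfun_apply[OF blin_first[of \<phi> "- s"]] by simp
  define c where "c = \<psi> x0 / s + (a - 1)"
  show ?thesis
  proof (intro exI[of _ u] exI[of _ c] allI)
    fix x
    show "ereal (blinfun_apply u x + c) \<le> f0 x"
    proof (cases "f0 x")
      case (real v)
      have "\<psi> x + v * s \<le> \<psi> x0 + (a - 1) * s" using ineq[of x v] real by simp
      hence "v * s \<le> (\<psi> x0 - \<psi> x + (a - 1) * s)" by simp
      hence "(\<psi> x0 - \<psi> x + (a - 1) * s) / s \<le> v" using sneg by (simp add: divide_le_eq)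
      moreover have "(\<psi> x0 - \<psi> x + (a - 1) * s) / s = \<psi> x / (- s) + c"
        unfolding c_def using sneg by (simp add: field_simps)
      ultimately show ?thesis using real u by simp
    next
      case PInf thus ?thesis by simp
    next
      case MInf thus ?thesis using pr unfolding proper_fun_def by simp
    qed
  qed
qed



instantiation "fun" :: (type, real_vector) real_vector
begin
definition scaleR_fun :: "real \<Rightarrow> ('a \<Rightarrow> 'b) \<Rightarrow> 'a \<Rightarrow> 'b" where
  "scaleR_fun c f = (\<lambda>x. c *\<^sub>R f x)"
instance by standard (auto simp: scaleR_fun_def fun_eq_iff algebra_simps)
end

lemma scaleR_fun_apply [simp]: "(c *\<^sub>R f) x = c *\<^sub>R f x"
  by (simp add: scaleR_fun_def)

lemma sum_fun_apply: "(\<Sum>i\<in>I. f i) x = (\<Sum>i\<in>I. f i x)"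
  by (induct I rule: infinite_finite_induct) auto

lemma additive_sum:
  assumes "\<And>x y. L (x + y) = L x + (L y :: real)" and "finite I"
  shows "L (\<Sum>i\<in>I. f i) = (\<Sum>i\<in>I. L (f i))"
  using assms(2)
proof (induct I rule: finite_induct)
  case empty
  have "L 0 = L (0 + 0)" by simp
  also have "\<dots> = L 0 + L 0" by (rule assms(1))
  finally show ?case by simp
next
  case (insert a I) thus ?case using assms(1) by simp
qed

lemma stage1:
  fixes G :: "nat \<Rightarrow> 'x::real_vector \<Rightarrow> real" and D :: "'x set"
  assumes D: "convex D" "x0 \<in> D" and cvx: "\<And>i. i \<le> m \<Longrightarrow> convex_on D (G i)"
    and no: "\<not> (\<exists>x\<in>D. \<forall>i\<le>m. G i x < \<epsilon>)"
  shows "\<exists>lm. (\<forall>i\<le>m. 0 \<le> lm i) \<and> 0 < (\<Sum>i\<le>m. lm i)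
     \<and> (\<forall>x\<in>D. \<epsilon> * (\<Sum>i\<le>m. lm i) \<le> (\<Sum>i\<le>m. lm i * G i x))"
proof -
  define A where "A = {t::nat\<Rightarrow>real. \<exists>x\<in>D. \<forall>i\<le>m. G i x < t i}"
  define c where "c = (\<lambda>i. if i \<le> m then G i x0 + 1 else 0)"
  define U where "U = (\<lambda>t. t - c) ` A"
  define e where "e = (\<lambda>i. if i \<le> m then \<epsilon> else 0)"
  have cA: "convex A" unfolding convex_alt
  proof (intro ballI allI impI)
    fix p q :: "nat \<Rightarrow> real" and u :: real assume "p \<in> A" "q \<in> A" and u: "0 \<le> u \<and> u \<le> 1"
    then obtain x1 x2 where x: "x1 \<in> D" "x2 \<in> D" "\<forall>i\<le>m. G i x1 < p i" "\<forall>i\<le>m. G i x2 < q i"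
      unfolding A_def by blast
    have xin: "(1 - u) *\<^sub>R x1 + u *\<^sub>R x2 \<in> D" using convexD_alt[OF D(1) x(1,2)] u by auto
    have "G i ((1 - u) *\<^sub>R x1 + u *\<^sub>R x2) < ((1 - u) *\<^sub>R p + u *\<^sub>R q) i" if i: "i \<le> m" for i
    proof -
      have "G i ((1 - u) *\<^sub>R x1 + u *\<^sub>R x2) \<le> (1 - u) * G i x1 + u * G i x2"
        using convex_onD[OF cvx[OF i]] u x(1,2) by auto
      moreover have "(1 - u) * G i x1 + u * G i x2 < (1 - u) * p i + u * q i"
      proof (cases "u = 0")
        case True thus ?thesis using x i by simp
      next
        case False
        have "(1 - u) * G i x1 \<le> (1 - u) * p i" using u x i by (intro mult_left_mono) auto
        moreover have "u * G i x2 < u * q i" using u x i False by simp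
        ultimately show ?thesis by simp
      qed
      ultimately show ?thesis by simp
    qed
    thus "(1 - u) *\<^sub>R p + u *\<^sub>R q \<in> A" unfolding A_def using xin by blast
  qed
  have cA_in: "c \<in> A" unfolding A_def c_def by (rule CollectI, rule bexI[OF _ D(2)]) auto
  have cU: "convex U" unfolding U_def by (rule convex_translation_subtract[OF cA])
  have z0: "0 \<in> U" unfolding U_def using cA_in by force
  have absb: "\<exists>t>0. t *\<^sub>R v \<in> U" for v
  proof -
    define M where "M = (\<Sum>i\<le>m. \<bar>v i\<bar>) + 1"
    have M: "M > 0" unfolding M_def by (simp add: add_nonneg_pos sum_nonneg)
    define t where "t = 1 / M"
    have t: "t > 0" using M unfolding t_def by simp
    have "c + t *\<^sub>R v \<in> A" unfolding A_def
    proof (rule CollectI, intro bexI[OF _ D(2)] allI impI)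
      fix i assume i: "i \<le> m"
      have "\<bar>v i\<bar> \<le> (\<Sum>i\<le>m. \<bar>v i\<bar>)" using i by (intro member_le_sum) auto
      hence "\<bar>v i\<bar> < M" unfolding M_def by simp
      hence "\<bar>t * v i\<bar> < 1" using M unfolding t_def by (simp add: abs_mult divide_less_eq)
      thus "G i x0 < (c + t *\<^sub>R v) i" unfolding c_def using i by (simp add: abs_less_iff)
    qed
    hence "t *\<^sub>R v \<in> U" unfolding U_def by (force intro: image_eqI[of _ _ "c + t *\<^sub>R v"])
    thus ?thesis using t by blast
  qed
  have eA: "e \<notin> A" using no unfolding A_def e_def by auto
  have zU: "e - c \<notin> U" using eA unfolding U_def by auto
  obtain L where L: "\<forall>x y. L (x + y) = L x + L y" "\<forall>a x. L (a *\<^sub>R x) = a * L x"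
     "\<forall>u\<in>U. L u \<le> 1" "L (e - c) \<ge> 1"
    using sep_alg[OF cU z0 absb zU] by blast
  have Ladd: "L (x + y) = L x + L y" for x y using L(1) by blast
  have Lsc: "L (a *\<^sub>R x) = a * L x" for a x using L(2) by blast
  have Lminus: "L (x - y) = L x - L y" for x y
    using Ladd[of "x - y" y] by simp
  have LA: "L t \<le> L e" if "t \<in> A" for t
  proof -
    have "t - c \<in> U" unfolding U_def using that by blast
    hence "L (t - c) \<le> 1" using L(3) by blast
    thus ?thesis using L(4) Lminus by simp
  qed
  define \<delta> where "\<delta> i = (\<lambda>j::nat. if j = i then 1 else (0::real))" for i :: nat
  define lm where "lm i = - L (\<delta> i)" for i
  have repr: "L w = - (\<Sum>i\<le>m. w i * lm i)" if "\<And>j. j > m \<Longrightarrow> w j = 0" for w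
  proof -
    have "w = (\<Sum>i\<le>m. w i *\<^sub>R \<delta> i)"
    proof
      fix j
      have "(\<Sum>i\<le>m. w i *\<^sub>R \<delta> i) j = (\<Sum>i\<le>m. if i = j then w i else 0)"
        unfolding sum_fun_apply by (rule sum.cong) (auto simp: \<delta>_def)
      also have "\<dots> = (if j \<le> m then w j else 0)" by (simp add: sum.delta')
      finally show "w j = (\<Sum>i\<le>m. w i *\<^sub>R \<delta> i) j" using that[of j] by auto
    qed
    moreover have "L (\<Sum>i\<le>m. w i *\<^sub>R \<delta> i) = (\<Sum>i\<le>m. L (w i *\<^sub>R \<delta> i))"
      using additive_sum[of L "{..m}" "\<lambda>i. w i *\<^sub>R \<delta> i"] Ladd by simp
    ultimately have "L w = (\<Sum>i\<le>m. L (w i *\<^sub>R \<delta> i))" by simp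
    also have "\<dots> = - (\<Sum>i\<le>m. w i * lm i)" unfolding lm_def Lsc by (simp add: sum_negf)
    finally show ?thesis .
  qed
  have lpos: "0 \<le> lm i" if i: "i \<le> m" for i
  proof (rule ccontr)
    assume "\<not> 0 \<le> lm i"
    hence l: "L (\<delta> i) > 0" unfolding lm_def by simp
    define s where "s = (\<bar>L e - L c\<bar> + 1) / L (\<delta> i)"
    have s: "s \<ge> 0" unfolding s_def using l by simp
    have "c + s *\<^sub>R \<delta> i \<in> A" unfolding A_def
    proof (rule CollectI, intro bexI[OF _ D(2)] allI impI)
      fix j assume j: "j \<le> m"
      show "G j x0 < (c + s *\<^sub>R \<delta> i) j" unfolding c_def \<delta>_def using s j by auto
    qed
    hence "L (c + s *\<^sub>R \<delta> i) \<le> L e" by (rule LA)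
    moreover have "L (c + s *\<^sub>R \<delta> i) = L c + (\<bar>L e - L c\<bar> + 1)"
      unfolding Ladd Lsc s_def using l by simp
    ultimately show False by linarith
  qed
  define \<Lambda> where "\<Lambda> = (\<Sum>i\<le>m. lm i)"
  have \<Lambda>0: "\<Lambda> \<ge> 0" unfolding \<Lambda>_def using lpos by (intro sum_nonneg) auto
  have Le: "L e = - (\<epsilon> * \<Lambda>)"
    using repr[of e] unfolding e_def \<Lambda>_def by (simp add: sum_distrib_left)
  have bound: "\<epsilon> * \<Lambda> \<le> (\<Sum>i\<le>m. lm i * G i x)" if x: "x \<in> D" for x
  proof (rule real_eps_le)
    fix r :: real assume r: "r > 0"
    define \<eta> where "\<eta> = r / (\<Lambda> + 1)"
    have \<eta>: "\<eta> > 0" unfolding \<eta>_def using r \<Lambda>0 by simp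
    define t where "t = (\<lambda>i. if i \<le> m then G i x + \<eta> else 0)"
    have "t \<in> A" unfolding A_def t_def using \<eta> by (intro CollectI bexI[OF _ x]) auto
    hence "L t \<le> L e" by (rule LA)
    moreover have "L t = - (\<Sum>i\<le>m. (G i x + \<eta>) * lm i)" using repr[of t] unfolding t_def by simp
    moreover have "(\<Sum>i\<le>m. (G i x + \<eta>) * lm i) = (\<Sum>i\<le>m. lm i * G i x) + \<eta> * \<Lambda>"
      unfolding \<Lambda>_def by (simp add: algebra_simps sum.distrib sum_distrib_left)
    moreover have "\<eta> * \<Lambda> \<le> r"
    proof -
      have "\<eta> * \<Lambda> \<le> \<eta> * (\<Lambda> + 1)" using \<eta> by simp
      also have "\<dots> = r" unfolding \<eta>_def using \<Lambda>0 by simp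
      finally show ?thesis .
    qed
    ultimately show "\<epsilon> * \<Lambda> \<le> (\<Sum>i\<le>m. lm i * G i x) + r" using Le by linarith
  qed
  have \<Lambda>pos: "\<Lambda> > 0"
  proof (rule ccontr)
    assume "\<not> \<Lambda> > 0"
    hence "\<Lambda> = 0" using \<Lambda>0 by simp
    hence "\<forall>i\<in>{..m}. lm i = 0" using lpos unfolding \<Lambda>_def by (subst (asm) sum_nonneg_eq_0_iff) auto
    hence "L (e - c) = 0" using repr[of "e - c"] unfolding e_def c_def by simp
    thus False using L(4) by simp
  qed
  show ?thesis using lpos \<Lambda>pos bound unfolding \<Lambda>_def by blast
qed



lemma biconj_use:
  assumes "biconj f xss \<le> 0" "\<And>x. ereal (blinfun_apply u x) - f x \<le> ereal T"
  shows "blinfun_apply xss u \<le> T"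
proof -
  have c: "Defs.conj f u \<le> ereal T" unfolding Defs.conj_def by (rule SUP_least) (use assms(2) in auto)
  have "ereal (blinfun_apply xss u) - Defs.conj f u \<le> biconj f xss" unfolding biconj_def by (rule SUP_upper) simp
  hence le: "ereal (blinfun_apply xss u) - Defs.conj f u \<le> 0" using assms(1) by (rule order_trans)
  show ?thesis
  proof (cases "Defs.conj f u")
    case (real c') thus ?thesis using c le by simp
  next
    case PInf thus ?thesis using c by simp
  next
    case MInf thus ?thesis using le by simp
  qed
qed

theorem lemma7p1:
  fixes f0 :: "'a::banach \<Rightarrow> ereal"
    and f :: "nat \<Rightarrow> 'a \<Rightarrow> real"
    and m :: nat
  assumes "\<exists>x::'a. x \<noteq> 0"
    and "m \<ge> 1"
    and "proper_fun f0" and "convex_ext f0" and "lsc_ext f0"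
    and "\<And>i. i \<in> {1..m} \<Longrightarrow> convex_on UNIV (f i)"
    and "\<And>i. i \<in> {1..m} \<Longrightarrow> continuous_on UNIV (f i)"
    and "\<exists>xss. biconj f0 xss \<le> 0 \<and> (\<forall>i\<in>{1..m}. biconj (\<lambda>x. ereal (f i x)) xss \<le> 0)"
  shows "\<forall>\<epsilon>>0. \<exists>x. f0 x \<le> ereal \<epsilon> \<and> (\<forall>i\<in>{1..m}. f i x \<le> \<epsilon>)"
proof (intro allI impI, rule ccontr)
  fix \<epsilon> :: real assume \<epsilon>: "\<epsilon> > 0" and neg: "\<not> (\<exists>x. f0 x \<le> ereal \<epsilon> \<and> (\<forall>i\<in>{1..m}. f i x \<le> \<epsilon>))"
  note pr = assms(3) and cv = assms(4) and ls = assms(5) and fcv = assms(6) and fct = assms(7)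
  obtain xss where xss: "biconj f0 xss \<le> 0" "\<And>i. i \<in> {1..m} \<Longrightarrow> biconj (\<lambda>x. ereal (f i x)) xss \<le> 0"
    using assms(8) by blast
  define D where "D = {x. f0 x \<noteq> \<infinity>}"
  define G where "G i x = (if i = 0 then real_of_ereal (f0 x) else f i x)" for i x
  have nm: "f0 x \<noteq> -\<infinity>" for x using pr unfolding proper_fun_def by blast
  have fin: "f0 x = ereal (G 0 x)" if "x \<in> D" for x
    using that nm[of x] unfolding D_def G_def by (cases "f0 x") auto
  have epi: "convex {(x, r::real). f0 x \<le> ereal r}" using cv unfolding convex_ext_def .
  have cvxG0: "convex_on D (G 0)"
  proof -
    have step: "(1 - t) *\<^sub>R x + t *\<^sub>R y \<in> D \<and> G 0 ((1 - t) *\<^sub>R x + t *\<^sub>R y) \<le> (1 - t) * G 0 x + t * G 0 y"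
      if "x \<in> D" "y \<in> D" "0 \<le> t" "t \<le> 1" for x y and t :: real
    proof -
      have "(x, G 0 x) \<in> {(x, r::real). f0 x \<le> ereal r}" using fin[OF that(1)] by simp
      moreover have "(y, G 0 y) \<in> {(x, r::real). f0 x \<le> ereal r}" using fin[OF that(2)] by simp
      ultimately have "(1 - t) *\<^sub>R (x, G 0 x) + t *\<^sub>R (y, G 0 y) \<in> {(x, r::real). f0 x \<le> ereal r}"
        by (intro convexD_alt[OF epi]) (use that(3,4) in auto)
      hence le: "f0 ((1 - t) *\<^sub>R x + t *\<^sub>R y) \<le> ereal ((1 - t) * G 0 x + t * G 0 y)" by simp
      hence inD: "(1 - t) *\<^sub>R x + t *\<^sub>R y \<in> D" unfolding D_def by auto
      show ?thesis using le fin[OF inD] inD by simp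
    qed
    have "convex D" unfolding convex_alt using step by blast
    thus ?thesis using step by (intro convex_onI) auto
  qed
  have cvxD: "convex D" using cvxG0 by (simp add: convex_on_def)
  have cvxG: "convex_on D (G i)" if "i \<le> m" for i
  proof (cases "i = 0")
    case True thus ?thesis using cvxG0 by simp
  next
    case False
    hence "i \<in> {1..m}" using that by auto
    hence "convex_on D (f i)" using convex_on_subset[OF fcv subset_UNIV cvxD] by blast
    thus ?thesis using False unfolding G_def by simp
  qed
  obtain x0 where "f0 x0 \<noteq> \<infinity>" using pr unfolding proper_fun_def by blast
  hence x0: "x0 \<in> D" unfolding D_def by simp
  have no: "\<not> (\<exists>x\<in>D. \<forall>i\<le>m. G i x < \<epsilon>)"
  proof
    assume "\<exists>x\<in>D. \<forall>i\<le>m. G i x < \<epsilon>"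
    then obtain x where x: "x \<in> D" "\<forall>i\<le>m. G i x < \<epsilon>" by blast
    have "G 0 x < \<epsilon>" using x(2) by simp
    hence "f0 x \<le> ereal \<epsilon>" using fin[OF x(1)] by simp
    moreover have "\<forall>i\<in>{1..m}. f i x \<le> \<epsilon>" using x(2) unfolding G_def by force
    ultimately show False using neg by blast
  qed
  obtain lm where lm: "\<And>i. i \<le> m \<Longrightarrow> 0 \<le> lm i" "0 < (\<Sum>i\<le>m. lm i)"
    "\<And>x. x \<in> D \<Longrightarrow> \<epsilon> * (\<Sum>i\<le>m. lm i) \<le> (\<Sum>i\<le>m. lm i * G i x)"
    using stage1[OF cvxD x0 cvxG no] by blast
  define \<Lambda> where "\<Lambda> = (\<Sum>i\<le>m. lm i)"
  have split: "(\<Sum>i\<le>m. lm i * G i x) = lm 0 * G 0 x + (\<Sum>i=1..m. lm i * f i x)" for x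
  proof -
    have "{..m} = insert 0 {1..m}" by auto
    hence "(\<Sum>i\<le>m. lm i * G i x) = lm 0 * G 0 x + (\<Sum>i=1..m. lm i * G i x)" by simp
    also have "(\<Sum>i=1..m. lm i * G i x) = (\<Sum>i=1..m. lm i * f i x)"
      by (rule sum.cong) (auto simp: G_def)
    finally show ?thesis .
  qed
  have Hc: "convex_on UNIV (\<lambda>x. lm i * f i x) \<and> continuous_on UNIV (\<lambda>x. lm i * f i x)"
    if "i \<in> {1..m}" for i
    using convex_on_cmul[OF lm(1) fcv[OF that]] continuous_on_mult[OF continuous_on_const fct[OF that]] that
    by auto
  have gc: "convex_on D (\<lambda>x. lm 0 * G 0 x)" using convex_on_cmul[OF lm(1) cvxG0] by simp
  have bnd: "\<epsilon> * \<Lambda> \<le> lm 0 * G 0 x + (\<Sum>i=1..m. lm i * f i x)" if "x \<in> D" for x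
    using lm(3)[OF that] split[of x] unfolding \<Lambda>_def by simp
  obtain y0 y T0 T where Y: "y0 + (\<Sum>i=1..m. y i) = 0"
      "\<forall>x\<in>D. blinfun_apply y0 x - lm 0 * G 0 x \<le> T0"
      "\<forall>i\<in>{1..m}. \<forall>z. blinfun_apply (y i) z - lm i * f i z \<le> T i"
      "T0 + (\<Sum>i=1..m. T i) \<le> - (\<epsilon> * \<Lambda>)"
    using ind[of D m "\<lambda>i x. lm i * f i x" "\<lambda>x. lm 0 * G 0 x" "\<epsilon> * \<Lambda>", OF cvxD _ Hc gc bnd] x0 by blast
  have bi: "blinfun_apply xss (y i) \<le> T i" if i: "i \<in> {1..m}" for i
  proof (cases "lm i = 0")
    case True
    have b: "blinfun_apply (y i) z \<le> T i" for z using Y(3) i True by (metis mult_zero_left diff_zero)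
    hence "y i = 0" by (rule blin_above_zero)
    moreover have "0 \<le> T i" using b[of 0] by simp
    ultimately show ?thesis by simp
  next
    case False
    hence lp: "lm i > 0" using lm(1)[of i] i by auto
    define u where "u = (1 / lm i) *\<^sub>R y i"
    have "blinfun_apply xss u \<le> T i / lm i"
    proof (rule biconj_use[OF xss(2)[OF i]])
      fix x
      have "blinfun_apply (y i) x - lm i * f i x \<le> T i" using Y(3) i by auto
      hence "(blinfun_apply (y i) x - lm i * f i x) / lm i \<le> T i / lm i" using lp by (simp add: divide_right_mono)
      hence "blinfun_apply u x - f i x \<le> T i / lm i" unfolding u_def using lp
        by (simp add: blinfun.scaleR_left diff_divide_distrib)
      thus "ereal (blinfun_apply u x) - ereal (f i x) \<le> ereal (T i / lm i)" by simp
    qed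
    moreover have "blinfun_apply xss u = blinfun_apply xss (y i) / lm i"
      unfolding u_def by (simp add: blinfun.scaleR_right)
    ultimately show ?thesis using lp by (simp add: divide_le_cancel)
  qed
  have b0: "blinfun_apply xss y0 \<le> T0"
  proof (cases "lm 0 = 0")
    case False
    hence lp: "lm 0 > 0" using lm(1)[of 0] by auto
    define u where "u = (1 / lm 0) *\<^sub>R y0"
    have "blinfun_apply xss u \<le> T0 / lm 0"
    proof (rule biconj_use[OF xss(1)])
      fix x
      show "ereal (blinfun_apply u x) - f0 x \<le> ereal (T0 / lm 0)"
      proof (cases "x \<in> D")
        case True
        have "blinfun_apply y0 x - lm 0 * G 0 x \<le> T0" using Y(2) True by auto
        hence "(blinfun_apply y0 x - lm 0 * G 0 x) / lm 0 \<le> T0 / lm 0" using lp by (simp add: divide_right_mono)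
        hence "blinfun_apply u x - G 0 x \<le> T0 / lm 0" unfolding u_def using lp
          by (simp add: blinfun.scaleR_left diff_divide_distrib)
        thus ?thesis using fin[OF True] by simp
      next
        case False
        hence "f0 x = \<infinity>" unfolding D_def by simp
        thus ?thesis by simp
      qed
    qed
    moreover have "blinfun_apply xss u = blinfun_apply xss y0 / lm 0"
      unfolding u_def by (simp add: blinfun.scaleR_right)
    ultimately show ?thesis using lp by (simp add: divide_le_cancel)
  next
    case True
    have yD: "blinfun_apply y0 x \<le> T0" if "x \<in> D" for x using Y(2) that True by auto
    obtain u c where uc: "\<And>x. ereal (blinfun_apply u x + c) \<le> f0 x" using affine_minorant[OF pr cv ls] by blast
    have tb: "blinfun_apply xss u + t * blinfun_apply xss y0 \<le> t * T0 - c" if t: "t > 0" for t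
    proof -
      define w where "w = u + t *\<^sub>R y0"
      have "blinfun_apply xss w \<le> t * T0 - c"
      proof (rule biconj_use[OF xss(1)])
        fix x
        show "ereal (blinfun_apply w x) - f0 x \<le> ereal (t * T0 - c)"
        proof (cases "x \<in> D")
          case True
          have "blinfun_apply u x + c \<le> G 0 x" using uc[of x] fin[OF True] by simp
          moreover have "t * blinfun_apply y0 x \<le> t * T0" using yD[OF True] t by simp
          ultimately have "blinfun_apply w x - G 0 x \<le> t * T0 - c" unfolding w_def
            by (simp add: blinfun.add_left blinfun.scaleR_left)
          thus ?thesis using fin[OF True] by simp
        next
          case False
          hence "f0 x = \<infinity>" unfolding D_def by simp
          thus ?thesis by simp
        qed
      qed
      moreover have "blinfun_apply xss w = blinfun_apply xss u + t * blinfun_apply xss y0"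
        unfolding w_def by (simp add: blinfun.add_right blinfun.scaleR_right)
      ultimately show ?thesis by simp
    qed
    show ?thesis
    proof (rule ccontr)
      assume "\<not> blinfun_apply xss y0 \<le> T0"
      hence d: "blinfun_apply xss y0 - T0 > 0" by simp
      define t where "t = (\<bar>blinfun_apply xss u\<bar> + \<bar>c\<bar> + 1) / (blinfun_apply xss y0 - T0)"
      have t: "t > 0" unfolding t_def using d by (intro divide_pos_pos) auto
      have "t * (blinfun_apply xss y0 - T0) = \<bar>blinfun_apply xss u\<bar> + \<bar>c\<bar> + 1"
        unfolding t_def using d by simp
      moreover have "blinfun_apply xss u + t * blinfun_apply xss y0 \<le> t * T0 - c" by (rule tb[OF t])
      ultimately show False by (simp add: algebra_simps)
    qed
  qed
  have "blinfun_apply xss (y0 + (\<Sum>i=1..m. y i)) = blinfun_apply xss y0 + (\<Sum>i=1..m. blinfun_apply xss (y i))"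
    by (simp add: blinfun.add_right blinfun.sum_right)
  hence "0 = blinfun_apply xss y0 + (\<Sum>i=1..m. blinfun_apply xss (y i))" using Y(1) by simp
  also have "\<dots> \<le> T0 + (\<Sum>i=1..m. T i)" using b0 bi by (intro add_mono sum_mono) auto
  also have "\<dots> \<le> - (\<epsilon> * \<Lambda>)" by (rule Y(4))
  finally have "\<epsilon> * \<Lambda> \<le> 0" by simp
  moreover have "\<epsilon> * \<Lambda> > 0" using \<epsilon> lm(2) unfolding \<Lambda>_def by simp
  ultimately show False by simp
qed

end
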